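(* Let $Q_1,\ldots,Q_n$ be positive definite real symmetric $n\times n$ matrices with $\sum_{i=1}^n\operatorname{tr}Q_i=n$. Let $H=\{x\in\mathbb R^n:\sum_i x_i=0\}$ and $f:H\to\mathbb R$, $f(x_1,\ldots,x_n)=\ln\det\left(\sum_{i=1}^n e^{x_i}Q_i\right)$, and let $(\xi_1,\ldots,\xi_n)\in H$ be a point at which $f$ attains its minimum on $H$. Let $S$ be an $n\times n$ matrix with $S^*S=\sum_{i=1}^n e^{\xi_i}Q_i$, let $T=S^{-1}$, $\tau_i=e^{\xi_i}$ and $B_i=\tau_iT^*Q_iT$ for $i=1,\ldots,n$. Then $$D(B_1,\ldots,B_n)\ \ge\ D(Q_1,\ldots,Q_n).$$
   Context: For real symmetric $n\times n$ matrices $Q_1,\ldots,Q_n$, the mixed discriminant is $D(Q_1,\ldots,Q_n)=\frac{\partial^n}{\partial t_1\cdots\partial t_n}\det(t_1Q_1+\cdots+t_nQ_n)$. $S^*$ denotes the transpose of $S$. (It is known that $f$ is strictly convex on $H$ and attains its minimum at a unique point, and then $(B_1,\ldots,B_n)$ is doubly stochastic.) *)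

theory Defs
  imports "HOL-Analysis.Analysis"
begin

definition partial_coord :: "'n::finite \<Rightarrow> (real^'n \<Rightarrow> real) \<Rightarrow> (real^'n \<Rightarrow> real)" where
  "partial_coord i g = (\<lambda>x. deriv (\<lambda>s. g (x + s *\<^sub>R axis i 1)) 0)"

definition all_indices :: "'n::finite list" where
  "all_indices = (SOME xs. distinct xs \<and> set xs = UNIV)"

text \<open>Mixed discriminant: the mixed partial derivative d^n/(dt_1...dt_n) of
  det(t_1 Q_1 + ... + t_n Q_n); it is a constant (the polynomial is homogeneous
  of degree n), we evaluate it at t = 0.\<close>
definition mixed_discr :: "('n::finite \<Rightarrow> real^'n^'n) \<Rightarrow> real" where
  "mixed_discr Q =
     foldr partial_coord (all_indices :: 'n list)
       (\<lambda>t. det (\<Sum>i\<in>UNIV. t $ i *\<^sub>R Q i)) 0"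

definition pos_def_sym :: "real^'n^'n \<Rightarrow> bool" where
  "pos_def_sym A \<longleftrightarrow> transpose A = A \<and> (\<forall>x. x \<noteq> 0 \<longrightarrow> x \<bullet> (A *v x) > 0)"

end

theory Submission
  imports Defs
begin


definition monom :: "('n::finite \<Rightarrow> nat) \<Rightarrow> real^'n \<Rightarrow> real" where
  "monom c t = (\<Prod>j\<in>UNIV. (t$j)^(c j))"

definition polyf :: "'m set \<Rightarrow> ('m \<Rightarrow> real) \<Rightarrow> ('m \<Rightarrow> 'n::finite \<Rightarrow> nat) \<Rightarrow> real^'n \<Rightarrow> real" where
  "polyf M a c = (\<lambda>t. \<Sum>m\<in>M. a m * monom (c m) t)"

lemma mono_line:
  "monom c (x + s *\<^sub>R axis i 1) = (x$i + s)^(c i) * (\<Prod>j\<in>UNIV-{i}. (x$j)^(c j))"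
proof -
  have "monom c (x + s *\<^sub>R axis i 1) = (\<Prod>j\<in>UNIV. ((x + s *\<^sub>R axis i 1)$j)^(c j))"
    by (simp add: monom_def)
  also have "\<dots> = ((x + s *\<^sub>R axis i 1)$i)^(c i) * (\<Prod>j\<in>UNIV-{i}. ((x + s *\<^sub>R axis i 1)$j)^(c j))"
    by (rule prod.remove) simp_all
  also have "\<dots> = (x$i + s)^(c i) * (\<Prod>j\<in>UNIV-{i}. (x$j)^(c j))"
    by (auto simp: axis_def intro!: prod.cong)
  finally show ?thesis .
qed

lemma mono_line_deriv:
  "((\<lambda>s. monom c (x + s *\<^sub>R axis i 1)) has_real_derivative
      (real (c i) * monom (c(i := c i - 1)) x)) (at 0)"
proof -
  have e: "monom (c(i := c i - 1)) x = (x$i)^(c i - 1) * (\<Prod>j\<in>UNIV-{i}. (x$j)^(c j))"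
    using mono_line[of "c(i := c i - 1)" x 0 i]
    by (auto intro!: prod.cong)
  have "((\<lambda>s. (x$i + s)^(c i) * (\<Prod>j\<in>UNIV-{i}. (x$j)^(c j))) has_real_derivative
      (real (c i) * (x$i + 0)^(c i - 1) * 1) * (\<Prod>j\<in>UNIV-{i}. (x$j)^(c j))) (at 0)"
    by (intro derivative_eq_intros) auto
  then show ?thesis unfolding mono_line e by (simp add: mult.assoc)
qed

lemma polyf_partial:
  assumes "finite M"
  shows "partial_coord i (polyf M a c) = polyf M (\<lambda>m. a m * real (c m i)) (\<lambda>m. (c m)(i := c m i - 1))"
proof
  fix x
  have "((\<lambda>s. polyf M a c (x + s *\<^sub>R axis i 1)) has_real_derivative
     (\<Sum>m\<in>M. a m * (real (c m i) * monom ((c m)(i := c m i - 1)) x))) (at 0)"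
    unfolding polyf_def
    by (intro DERIV_sum DERIV_cmult mono_line_deriv)
  then show "partial_coord i (polyf M a c) x = polyf M (\<lambda>m. a m * real (c m i)) (\<lambda>m. (c m)(i := c m i - 1)) x"
    unfolding partial_coord_def by (simp add: DERIV_imp_deriv polyf_def mult.assoc)
qed

lemma polyf_foldr:
  assumes "finite M" "distinct xs"
  shows "foldr partial_coord xs (polyf M a c) =
     polyf M (\<lambda>m. a m * (\<Prod>i\<in>set xs. real (c m i))) (\<lambda>m j. if j \<in> set xs then c m j - 1 else c m j)"
  using assms(2)
proof (induction xs)
  case Nil
  then show ?case by (simp add: polyf_def)
next
  case (Cons i xs)
  then have ni: "i \<notin> set xs" and IH: "foldr partial_coord xs (polyf M a c) =
     polyf M (\<lambda>m. a m * (\<Prod>i\<in>set xs. real (c m i))) (\<lambda>m j. if j \<in> set xs then c m j - 1 else c m j)"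
    by auto
  have "foldr partial_coord (i # xs) (polyf M a c) = partial_coord i (foldr partial_coord xs (polyf M a c))"
    by simp
  also have "\<dots> = polyf M (\<lambda>m. a m * (\<Prod>i\<in>set xs. real (c m i)) * real (c m i))
      (\<lambda>m. (\<lambda>j. if j \<in> set xs then c m j - 1 else c m j)(i := c m i - 1))"
    unfolding IH by (simp add: polyf_partial[OF assms(1)] ni)
  also have "\<dots> = polyf M (\<lambda>m. a m * (\<Prod>i\<in>set (i#xs). real (c m i))) (\<lambda>m j. if j \<in> set (i#xs) then c m j - 1 else c m j)"
  proof -
    have "(\<lambda>m. a m * (\<Prod>i\<in>set xs. real (c m i)) * real (c m i)) = (\<lambda>m. a m * (\<Prod>i\<in>set (i#xs). real (c m i)))"
      using ni by (auto simp: fun_eq_iff mult_ac)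
    moreover have "(\<lambda>m. (\<lambda>j. if j \<in> set xs then c m j - 1 else c m j)(i := c m i - 1)) = (\<lambda>m j. if j \<in> set (i#xs) then c m j - 1 else c m j)"
      by (auto simp: fun_eq_iff)
    ultimately show ?thesis by simp
  qed
  finally show ?case .
qed

lemma all_indices: "distinct (all_indices :: 'n::finite list) \<and> set (all_indices :: 'n list) = UNIV"
proof -
  obtain xs :: "'n list" where "set xs = UNIV \<and> distinct xs" using finite_distinct_list[of "UNIV :: 'n set"] by auto
  then have "\<exists>xs :: 'n list. distinct xs \<and> set xs = UNIV" by auto
  then show ?thesis unfolding all_indices_def by (rule someI_ex)
qed

lemma prod_zero_pow: "(\<Prod>j\<in>(UNIV::'n::finite set). real (c j) * (0::real)^(c j - 1)) = (if \<forall>j. c j = 1 then 1 else 0)"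
proof (cases "\<forall>j. c j = 1")
  case True then show ?thesis by simp
next
  case False
  then obtain j where "c j \<noteq> 1" by auto
  then have "real (c j) * (0::real)^(c j - 1) = 0" by (cases "c j") auto
  then show ?thesis using False by (auto intro: prod_zero)
qed

lemma mixed_discr_polyf:
  fixes X :: "'n::finite \<Rightarrow> real^'n^'n"
  assumes "finite M" "(\<lambda>t. det (\<Sum>i\<in>UNIV. t $ i *\<^sub>R X i)) = polyf M a c"
  shows "mixed_discr X = (\<Sum>m\<in>M. if (\<forall>j. c m j = 1) then a m else 0)"
proof -
  have "mixed_discr X = foldr partial_coord (all_indices :: 'n list) (polyf M a c) 0"
    unfolding mixed_discr_def assms(2) ..
  also have "\<dots> = (\<Sum>m\<in>M. a m * (\<Prod>i\<in>UNIV. real (c m i)) * (\<Prod>j\<in>UNIV. (0::real)^(c m j - 1)))"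
  proof -
    have d: "distinct (all_indices :: 'n list)" and s: "set (all_indices :: 'n list) = UNIV"
      using all_indices[where 'n='n] by auto
    show ?thesis unfolding polyf_foldr[OF assms(1) d] s by (simp add: polyf_def monom_def)
  qed
  also have "\<dots> = (\<Sum>m\<in>M. a m * (\<Prod>j\<in>UNIV. real (c m j) * (0::real)^(c m j - 1)))"
    by (simp add: prod.distrib mult.assoc)
  also have "\<dots> = (\<Sum>m\<in>M. if (\<forall>j. c m j = 1) then a m else 0)"
    by (simp only: prod_zero_pow) (auto intro!: sum.cong)
  finally show ?thesis .
qed



lemma prod_fun_mono: "(\<Prod>k\<in>UNIV. (t::real^'n::finite) $ ((\<pi>::'n\<Rightarrow>'n) k)) = monom (\<lambda>j. card {k. \<pi> k = j}) t"
proof -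
  have "(\<Prod>k\<in>UNIV. t $ (\<pi> k)) = (\<Prod>j\<in>UNIV. \<Prod>k\<in>{k\<in>UNIV. \<pi> k = j}. t $ (\<pi> k))"
    by (rule prod.group[where S=UNIV and T="UNIV::'n set" and g=\<pi>, symmetric]) auto
  also have "\<dots> = (\<Prod>j\<in>UNIV. (t$j)^(card {k. \<pi> k = j}))"
  proof (intro prod.cong refl)
    fix j
    have "(\<Prod>k\<in>{k\<in>UNIV. \<pi> k = j}. t $ (\<pi> k)) = (\<Prod>k\<in>{k. \<pi> k = j}. t $ j)"
      by (intro prod.cong) auto
    then show "(\<Prod>k\<in>{k\<in>UNIV. \<pi> k = j}. t $ (\<pi> k)) = (t$j)^(card {k. \<pi> k = j})"
      by simp
  qed
  finally show ?thesis by (simp add: monom_def)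
qed

lemma det_polyf:
  fixes X :: "'n::finite \<Rightarrow> real^'n^'n"
  shows "(\<lambda>t. det (\<Sum>i\<in>UNIV. t$i *\<^sub>R X i)) =
    polyf ({\<sigma>. \<sigma> permutes UNIV} \<times> UNIV)
      (\<lambda>(\<sigma>,\<pi>). of_int (sign \<sigma>) * (\<Prod>k\<in>UNIV. X (\<pi> k) $ k $ \<sigma> k))
      (\<lambda>(\<sigma>,\<pi>) j. card {k. \<pi> k = j})"
proof
  fix t :: "real^'n"
  have "det (\<Sum>i\<in>UNIV. t$i *\<^sub>R X i) = (\<Sum>\<sigma>\<in>{\<sigma>. \<sigma> permutes UNIV}. of_int (sign \<sigma>) *
      (\<Prod>k\<in>UNIV. \<Sum>i\<in>UNIV. t$i * X i $ k $ \<sigma> k))"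
    by (simp add: det_def)
  also have "\<dots> = (\<Sum>\<sigma>\<in>{\<sigma>. \<sigma> permutes UNIV}. of_int (sign \<sigma>) *
      (\<Sum>\<pi>\<in>UNIV. \<Prod>k\<in>UNIV. t$(\<pi> k) * X (\<pi> k) $ k $ \<sigma> k))"
    by (subst prod_sum_PiE) auto
  also have "\<dots> = (\<Sum>\<sigma>\<in>{\<sigma>. \<sigma> permutes UNIV}. \<Sum>\<pi>\<in>UNIV.
      (of_int (sign \<sigma>) * (\<Prod>k\<in>UNIV. X (\<pi> k) $ k $ \<sigma> k)) * monom (\<lambda>j. card {k. \<pi> k = j}) t)"
    by (simp add: sum_distrib_left prod.distrib prod_fun_mono mult_ac)
  also have "\<dots> = polyf ({\<sigma>. \<sigma> permutes UNIV} \<times> UNIV)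
      (\<lambda>(\<sigma>,\<pi>). of_int (sign \<sigma>) * (\<Prod>k\<in>UNIV. X (\<pi> k) $ k $ \<sigma> k))
      (\<lambda>(\<sigma>,\<pi>) j. card {k. \<pi> k = j}) t"
    unfolding polyf_def sum.cartesian_product by (rule sum.cong) auto
  finally show "det (\<Sum>i\<in>UNIV. t$i *\<^sub>R X i) = polyf ({\<sigma>. \<sigma> permutes UNIV} \<times> UNIV)
      (\<lambda>(\<sigma>,\<pi>). of_int (sign \<sigma>) * (\<Prod>k\<in>UNIV. X (\<pi> k) $ k $ \<sigma> k))
      (\<lambda>(\<sigma>,\<pi>) j. card {k. \<pi> k = j}) t" .
qed

lemma card_fibers_permutes: "(\<forall>j. card {k. \<pi> k = j} = 1) \<longleftrightarrow> \<pi> permutes (UNIV :: 'n::finite set)"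
proof -
  have "card {k. \<pi> k = j} = 1 \<longleftrightarrow> (\<exists>!k. \<pi> k = j)" for j
  proof
    assume "card {k. \<pi> k = j} = 1"
    then obtain x where x: "{k. \<pi> k = j} = {x}" by (auto simp: card_1_singleton_iff)
    then have "\<pi> x = j" by blast
    moreover have "\<pi> y = j \<Longrightarrow> y = x" for y using x by blast
    ultimately show "\<exists>!k. \<pi> k = j" by blast
  next
    assume "\<exists>!k. \<pi> k = j"
    then obtain x where "\<pi> x = j" "\<And>y. \<pi> y = j \<Longrightarrow> y = x" by blast
    then have "{k. \<pi> k = j} = {x}" by blast
    then show "card {k. \<pi> k = j} = 1" by simp
  qed
  then show ?thesis by (simp add: permutes_univ)
qed

definition MD :: "('n::finite \<Rightarrow> real^'n^'n) \<Rightarrow> real" where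
  "MD X = (\<Sum>\<pi>\<in>{\<pi>. \<pi> permutes (UNIV::'n set)}. \<Sum>\<sigma>\<in>{\<sigma>. \<sigma> permutes (UNIV::'n set)}.
      of_int (sign \<sigma>) * (\<Prod>k\<in>UNIV. X (\<pi> k) $ k $ \<sigma> k))"

lemma mixed_discr_MD: "mixed_discr X = MD X"
proof -
  have "mixed_discr X = (\<Sum>m\<in>{\<sigma>. \<sigma> permutes UNIV} \<times> UNIV.
      if (\<forall>j. (\<lambda>(\<sigma>,\<pi>) j. card {k. \<pi> k = j}) m j = 1) then (\<lambda>(\<sigma>,\<pi>). of_int (sign \<sigma>) * (\<Prod>k\<in>UNIV. X (\<pi> k) $ k $ \<sigma> k)) m else 0)"
    by (rule mixed_discr_polyf[OF _ det_polyf]) simp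
  also have "\<dots> = (\<Sum>\<sigma>\<in>{\<sigma>. \<sigma> permutes UNIV}. \<Sum>\<pi>\<in>UNIV.
      if \<pi> permutes UNIV then of_int (sign \<sigma>) * (\<Prod>k\<in>UNIV. X (\<pi> k) $ k $ \<sigma> k) else 0)"
    unfolding sum.cartesian_product by (intro sum.cong refl) (simp only: split_beta card_fibers_permutes)
  also have "\<dots> = (\<Sum>\<sigma>\<in>{\<sigma>. \<sigma> permutes UNIV}. \<Sum>\<pi>\<in>{\<pi>. \<pi> permutes UNIV}.
      of_int (sign \<sigma>) * (\<Prod>k\<in>UNIV. X (\<pi> k) $ k $ \<sigma> k))"
    by (rule sum.cong[OF refl]) (simp add: sum.inter_filter[symmetric])
  also have "\<dots> = MD X"
    unfolding MD_def by (rule sum.swap)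
  finally show ?thesis .
qed



lemma inner_det_sq:
  fixes U :: "real^'n::finite^'n"
  shows "(\<Sum>\<pi>\<in>{\<pi>. \<pi> permutes (UNIV::'n set)}. \<Sum>\<sigma>\<in>{\<sigma>. \<sigma> permutes (UNIV::'n set)}.
     of_int (sign \<sigma>) * (\<Prod>k\<in>UNIV. U $ \<pi> k $ k * U $ \<pi> k $ \<sigma> k)) = (det U)^2"
proof -
  have "(\<Sum>\<pi>\<in>{\<pi>. \<pi> permutes (UNIV::'n set)}. \<Sum>\<sigma>\<in>{\<sigma>. \<sigma> permutes (UNIV::'n set)}.
     of_int (sign \<sigma>) * (\<Prod>k\<in>UNIV. U $ \<pi> k $ k * U $ \<pi> k $ \<sigma> k))
    = (\<Sum>\<pi>\<in>{\<pi>. \<pi> permutes (UNIV::'n set)}. (\<Prod>k\<in>UNIV. U $ \<pi> k $ k) * det (\<chi> k. U $ \<pi> k))"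
  proof (rule sum.cong[OF refl])
    fix \<pi> assume "\<pi> \<in> {\<pi>. \<pi> permutes (UNIV::'n set)}"
    show "(\<Sum>\<sigma>\<in>{\<sigma>. \<sigma> permutes (UNIV::'n set)}. of_int (sign \<sigma>) * (\<Prod>k\<in>UNIV. U $ \<pi> k $ k * U $ \<pi> k $ \<sigma> k))
       = (\<Prod>k\<in>UNIV. U $ \<pi> k $ k) * det (\<chi> k. U $ \<pi> k)"
      unfolding det_def by (simp add: sum_distrib_left prod.distrib mult_ac)
  qed
  also have "\<dots> = (\<Sum>\<pi>\<in>{\<pi>. \<pi> permutes (UNIV::'n set)}. (\<Prod>k\<in>UNIV. U $ \<pi> k $ k) * (of_int (sign \<pi>) * det U))"
    by (rule sum.cong[OF refl]) (simp add: det_permute_rows)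
  also have "\<dots> = det U * (\<Sum>\<pi>\<in>{\<pi>. \<pi> permutes (UNIV::'n set)}. of_int (sign \<pi>) * (\<Prod>k\<in>UNIV. transpose U $ k $ \<pi> k))"
    by (simp add: sum_distrib_left transpose_def mult_ac)
  also have "\<dots> = det U * det (transpose U)"
    unfolding det_def[of "transpose U"] ..
  finally show ?thesis by (simp add: power2_eq_square)
qed

lemma MD_nonneg:
  fixes X :: "'n::finite \<Rightarrow> real^'n^'n" and w :: "'n \<Rightarrow> 'n \<Rightarrow> real^'n"
  assumes X: "\<And>i a b. X i $ a $ b = (\<Sum>l\<in>UNIV. w i l $ a * w i l $ b)"
  shows "MD X \<ge> 0"
proof -
  define U :: "('n \<Rightarrow> 'n) \<Rightarrow> real^'n^'n" where "U \<kappa> = (\<chi> i. w i (\<kappa> i))" for \<kappa>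
  have key: "(\<Prod>k\<in>UNIV. X (\<pi> k) $ k $ \<sigma> k) = (\<Sum>\<kappa>\<in>UNIV. \<Prod>k\<in>UNIV. U \<kappa> $ \<pi> k $ k * U \<kappa> $ \<pi> k $ \<sigma> k)"
    if p: "\<pi> permutes UNIV" for \<pi> \<sigma> :: "'n \<Rightarrow> 'n"
  proof -
    have "(\<Prod>k\<in>UNIV. X (\<pi> k) $ k $ \<sigma> k) = (\<Prod>i\<in>UNIV. X i $ inv \<pi> i $ \<sigma> (inv \<pi> i))"
      using prod.permutes_inv[OF p, of "\<lambda>i k. X i $ k $ \<sigma> k"] by simp
    also have "\<dots> = (\<Prod>i\<in>UNIV. \<Sum>l\<in>UNIV. w i l $ inv \<pi> i * w i l $ \<sigma> (inv \<pi> i))"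
      by (simp add: X)
    also have "\<dots> = (\<Sum>\<kappa>\<in>UNIV. \<Prod>i\<in>UNIV. w i (\<kappa> i) $ inv \<pi> i * w i (\<kappa> i) $ \<sigma> (inv \<pi> i))"
      by (subst prod_sum_PiE) auto
    also have "\<dots> = (\<Sum>\<kappa>\<in>UNIV. \<Prod>k\<in>UNIV. U \<kappa> $ \<pi> k $ k * U \<kappa> $ \<pi> k $ \<sigma> k)"
    proof (rule sum.cong[OF refl])
      fix \<kappa> :: "'n \<Rightarrow> 'n"
      show "(\<Prod>i\<in>UNIV. w i (\<kappa> i) $ inv \<pi> i * w i (\<kappa> i) $ \<sigma> (inv \<pi> i)) =
          (\<Prod>k\<in>UNIV. U \<kappa> $ \<pi> k $ k * U \<kappa> $ \<pi> k $ \<sigma> k)"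
        using prod.permutes_inv[OF p, of "\<lambda>i k. w i (\<kappa> i) $ k * w i (\<kappa> i) $ \<sigma> k"]
        by (simp add: U_def)
    qed
    finally show ?thesis .
  qed
  have "MD X = (\<Sum>\<pi>\<in>{\<pi>. \<pi> permutes (UNIV::'n set)}. \<Sum>\<sigma>\<in>{\<sigma>. \<sigma> permutes (UNIV::'n set)}.
      \<Sum>\<kappa>\<in>UNIV. of_int (sign \<sigma>) * (\<Prod>k\<in>UNIV. U \<kappa> $ \<pi> k $ k * U \<kappa> $ \<pi> k $ \<sigma> k))"
    unfolding MD_def by (intro sum.cong refl) (simp add: key sum_distrib_left)
  also have "\<dots> = (\<Sum>\<pi>\<in>{\<pi>. \<pi> permutes (UNIV::'n set)}. \<Sum>\<kappa>\<in>UNIV.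
      \<Sum>\<sigma>\<in>{\<sigma>. \<sigma> permutes (UNIV::'n set)}. of_int (sign \<sigma>) * (\<Prod>k\<in>UNIV. U \<kappa> $ \<pi> k $ k * U \<kappa> $ \<pi> k $ \<sigma> k))"
    by (rule sum.cong[OF refl]) (rule sum.swap)
  also have "\<dots> = (\<Sum>\<kappa>\<in>UNIV. \<Sum>\<pi>\<in>{\<pi>. \<pi> permutes (UNIV::'n set)}.
      \<Sum>\<sigma>\<in>{\<sigma>. \<sigma> permutes (UNIV::'n set)}. of_int (sign \<sigma>) * (\<Prod>k\<in>UNIV. U \<kappa> $ \<pi> k $ k * U \<kappa> $ \<pi> k $ \<sigma> k))"
    by (rule sum.swap)
  also have "\<dots> = (\<Sum>\<kappa>\<in>UNIV. (det (U \<kappa>))^2)"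
    by (simp only: inner_det_sq)
  also have "\<dots> \<ge> 0" by (intro sum_nonneg) simp
  finally show ?thesis .
qed



lemma sym_dot:
  fixes A :: "real^'n::finite^'n"
  assumes "transpose A = A"
  shows "x \<bullet> (A *v y) = (A *v x) \<bullet> y"
proof -
  have s: "A $ i $ j = A $ j $ i" for i j
    using arg_cong[OF assms, of "\<lambda>M. M$i$j"] by (simp add: transpose_def)
  have "x \<bullet> (A *v y) = (\<Sum>i\<in>UNIV. \<Sum>j\<in>UNIV. x$i * A$i$j * y$j)"
    by (simp add: inner_vec_def matrix_vector_mult_def sum_distrib_left mult_ac)
  also have "\<dots> = (\<Sum>j\<in>UNIV. \<Sum>i\<in>UNIV. x$i * A$i$j * y$j)"
    by (rule sum.swap)
  also have "\<dots> = (\<Sum>j\<in>UNIV. \<Sum>i\<in>UNIV. x$i * A$j$i * y$j)"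
    by (simp only: s)
  also have "\<dots> = (A *v x) \<bullet> y"
    by (simp add: inner_vec_def matrix_vector_mult_def sum_distrib_right sum_distrib_left mult_ac)
  finally show ?thesis .
qed

lemma lin_quad_zero:
  fixes c d :: real
  assumes "\<And>s. 0 \<le> c * s + d * s^2"
  shows "c = 0"
proof (rule ccontr)
  assume c: "c \<noteq> 0"
  define m where "m = \<bar>d\<bar> + 1"
  have pos: "m > 0" "d - m < 0" unfolding m_def by auto
  define s where "s = - c / m"
  have "c * s + d * s^2 = c^2 / m^2 * (d - m)"
    unfolding s_def using pos by (simp add: field_simps power2_eq_square)
  also have "\<dots> < 0"
    using c pos by (intro mult_pos_neg) auto
  finally show False using assms[of s] by simp
qed

lemma eig_exists:
  fixes A :: "real^'n::finite^'n"
  assumes sym: "transpose A = A" and V: "subspace V" "V \<noteq> {0}" and inv: "\<forall>x\<in>V. A *v x \<in> V"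
  shows "\<exists>v l. v \<in> V \<and> norm v = 1 \<and> A *v v = l *\<^sub>R v"
proof -
  define K where "K = V \<inter> sphere 0 1"
  have cK: "compact K" unfolding K_def
    by (metis Int_commute closed_subspace V(1) compact_Int_closed compact_sphere)
  obtain x where x: "x \<in> V" "x \<noteq> 0" using V subspace_0 by blast
  have "(1 / norm x) *\<^sub>R x \<in> K" unfolding K_def using x V(1)
    by (simp add: subspace_scale)
  then have neK: "K \<noteq> {}" by auto
  define q where "q x = x \<bullet> (A *v x)" for x
  have cq: "continuous_on K q" unfolding q_def
    by (intro continuous_intros linear_continuous_on matrix_vector_mul_bounded_linear)
  obtain v where v: "v \<in> K" and vmax: "\<forall>y\<in>K. q y \<le> q v"
    using continuous_attains_sup[OF cK neK cq] by blast
  define l where "l = q v"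
  have vV: "v \<in> V" and nv: "norm v = 1" using v by (auto simp: K_def)
  have vv: "v \<bullet> v = 1" using nv by (simp add: norm_eq_1)
  have qscale: "q (c *\<^sub>R y) = c^2 * q y" for c y
    by (simp add: q_def matrix_vector_mult_scaleR power2_eq_square)
  have bound: "q y \<le> l * (y \<bullet> y)" if "y \<in> V" for y
  proof (cases "y = 0")
    case True then show ?thesis by (simp add: q_def)
  next
    case False
    have "(1 / norm y) *\<^sub>R y \<in> K" unfolding K_def using that False V(1)
      by (simp add: subspace_scale)
    then have "q ((1 / norm y) *\<^sub>R y) \<le> l" using vmax l_def by blast
    then have "q y / (norm y)^2 \<le> l" by (simp add: qscale power_divide)
    moreover have "y \<bullet> y = (norm y)^2" by (simp add: power2_norm_eq_inner)
    moreover have "(norm y)^2 > 0" using False by simp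
    ultimately show ?thesis by (simp add: divide_le_eq mult.commute)
  qed
  have orth: "w \<bullet> (l *\<^sub>R v - A *v v) = 0" if w: "w \<in> V" for w
  proof -
    have "0 \<le> (2 * (l * (v \<bullet> w) - w \<bullet> (A *v v))) * s + (l * (w \<bullet> w) - q w) * s^2" for s
    proof -
      have "v + s *\<^sub>R w \<in> V" using V(1) vV w by (simp add: subspace_add subspace_scale)
      then have b: "q (v + s *\<^sub>R w) \<le> l * ((v + s *\<^sub>R w) \<bullet> (v + s *\<^sub>R w))" by (rule bound)
      have e1: "q (v + s *\<^sub>R w) = l + 2 * s * (w \<bullet> (A *v v)) + s^2 * q w"
        using sym_dot[OF sym, of v w]
        by (simp add: q_def l_def matrix_vector_right_distrib matrix_vector_mult_scaleR inner_add_left inner_add_right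
            power2_eq_square algebra_simps inner_commute)
      have e2: "(v + s *\<^sub>R w) \<bullet> (v + s *\<^sub>R w) = 1 + 2 * s * (v \<bullet> w) + s^2 * (w \<bullet> w)"
        using vv by (simp add: inner_add_left inner_add_right power2_eq_square algebra_simps inner_commute)
      show ?thesis using b unfolding e1 e2 by (simp add: algebra_simps)
    qed
    then have "2 * (l * (v \<bullet> w) - w \<bullet> (A *v v)) = 0" by (rule lin_quad_zero)
    then show ?thesis by (simp add: inner_diff_right inner_commute)
  qed
  have "l *\<^sub>R v - A *v v \<in> V" using V(1) vV inv by (simp add: subspace_diff subspace_scale)
  from orth[OF this] have "l *\<^sub>R v - A *v v = 0" by simp
  then show ?thesis using vV nv by (metis eq_iff_diff_eq_0)
qed



lemma spectral_aux:
  fixes A :: "real^'n::finite^'n"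
  assumes sym: "transpose A = A"
  shows "subspace V \<Longrightarrow> (\<forall>x\<in>V. A *v x \<in> V) \<Longrightarrow> dim V = d \<Longrightarrow>
    \<exists>B. B \<subseteq> V \<and> finite B \<and> card B = d \<and> (\<forall>b\<in>B. norm b = 1 \<and> (\<exists>l. A *v b = l *\<^sub>R b)) \<and> pairwise orthogonal B"
proof (induction d arbitrary: V)
  case 0
  then show ?case by (intro exI[of _ "{}"]) auto
next
  case (Suc d)
  have "V \<noteq> {0}" using Suc.prems(3) by auto
  then obtain v l where vV: "v \<in> V" and nv: "norm v = 1" and Av: "A *v v = l *\<^sub>R v"
    using eig_exists[OF sym Suc.prems(1) _ Suc.prems(2)] by blast
  define W where "W = {y \<in> V. \<forall>x\<in>span {v}. orthogonal x y}"
  have sv: "span {v} \<subseteq> V" using vV Suc.prems(1) by (simp add: span_minimal)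
  have dimv: "dim (span {v}) = 1" using nv by (auto simp: dim_span dim_singleton)
  have "dim W + dim (span {v}) = dim V"
    unfolding W_def by (rule dim_subspace_orthogonal_to_vectors[OF subspace_span Suc.prems(1) sv])
  then have dW: "dim W = d"
    using dimv Suc.prems(3) by linarith
  have subW: "subspace W"
  proof -
    have e: "W = V \<inter> {y. \<forall>x\<in>span {v}. orthogonal x y}" unfolding W_def by auto
    show ?thesis unfolding e by (rule subspace_inter[OF Suc.prems(1) subspace_orthogonal_to_vectors])
  qed
  have ortho_v: "y \<in> W \<longleftrightarrow> y \<in> V \<and> v \<bullet> y = 0" for y
  proof -
    have "(\<forall>x\<in>span {v}. orthogonal x y) \<longleftrightarrow> v \<bullet> y = 0"
    proof
      assume "\<forall>x\<in>span {v}. orthogonal x y"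
      then show "v \<bullet> y = 0" using span_base[of v "{v}"] by (simp add: orthogonal_def)
    next
      assume h: "v \<bullet> y = 0"
      show "\<forall>x\<in>span {v}. orthogonal x y"
      proof
        fix x assume "x \<in> span {v}"
        then obtain k where "x = k *\<^sub>R v" unfolding span_singleton by blast
        then show "orthogonal x y" using h by (simp add: orthogonal_def)
      qed
    qed
    then show ?thesis unfolding W_def by auto
  qed
  have invW: "\<forall>x\<in>W. A *v x \<in> W"
  proof
    fix y assume y: "y \<in> W"
    have "v \<bullet> (A *v y) = (A *v v) \<bullet> y" by (rule sym_dot[OF sym])
    also have "\<dots> = 0" using y Av ortho_v by simp
    finally show "A *v y \<in> W" using y Suc.prems(2) ortho_v by auto
  qed
  obtain B' where B': "B' \<subseteq> W" "finite B'" "card B' = d"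
     "\<forall>b\<in>B'. norm b = 1 \<and> (\<exists>l. A *v b = l *\<^sub>R b)" "pairwise orthogonal B'"
    using Suc.IH[OF subW invW dW] by blast
  have vB': "v \<notin> B'"
  proof
    assume "v \<in> B'"
    then have "v \<bullet> v = 0" using B'(1) ortho_v by auto
    then show False using nv by simp
  qed
  have orthv: "b \<in> B' \<Longrightarrow> orthogonal v b \<and> orthogonal b v" for b
    using B'(1) ortho_v by (auto simp: orthogonal_def inner_commute)
  show ?case
  proof (intro exI[of _ "insert v B'"] conjI)
    show "insert v B' \<subseteq> V" using B'(1) vV W_def by auto
    show "finite (insert v B')" using B'(2) by simp
    show "card (insert v B') = Suc d" using B'(2,3) vB' by simp
    show "\<forall>b\<in>insert v B'. norm b = 1 \<and> (\<exists>l. A *v b = l *\<^sub>R b)" using B'(4) nv Av by auto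
    show "pairwise orthogonal (insert v B')"
      using B'(5) orthv by (auto simp: pairwise_insert)
  qed
qed


lemma orthonormal_expand:
  fixes B :: "(real^'n::finite) set"
  assumes "finite B" "card B = CARD('n)" "\<forall>b\<in>B. norm b = 1" "pairwise orthogonal B"
  shows "x = (\<Sum>b\<in>B. (b \<bullet> x) *\<^sub>R b)"
proof -
  have "0 \<notin> B" using assms(3) by auto
  then have ind: "independent B" using pairwise_orthogonal_independent assms(4) by blast
  have "card B = dim (UNIV :: (real^'n) set)" using assms(2) by simp
  then have sp: "UNIV \<subseteq> span B" using card_eq_dim[of B UNIV] ind assms(1) by auto
  define y where "y = x - (\<Sum>b\<in>B. (b \<bullet> x) *\<^sub>R b)"
  have "orthogonal y b" if b: "b \<in> B" for b
  proof -
    have "(\<Sum>c\<in>B. (c \<bullet> x) *\<^sub>R c) \<bullet> b = (\<Sum>c\<in>B. (c \<bullet> x) * (c \<bullet> b))"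
      by (simp add: inner_sum_left)
    also have "\<dots> = (b \<bullet> x) * (b \<bullet> b)"
    proof (rule sum.mono_neutral_left[where S="{b}", symmetric, THEN trans])
      show "finite B" by fact
      show "{b} \<subseteq> B" using b by simp
      show "\<forall>i\<in>B - {b}. (i \<bullet> x) * (i \<bullet> b) = 0"
        using assms(4) b by (auto simp: pairwise_def orthogonal_def)
      show "(\<Sum>i\<in>{b}. (i \<bullet> x) * (i \<bullet> b)) = (b \<bullet> x) * (b \<bullet> b)" by simp
    qed
    also have "\<dots> = b \<bullet> x" using assms(3) b by (simp add: norm_eq_1)
    finally show ?thesis unfolding y_def orthogonal_def by (simp add: inner_diff_left inner_diff_right inner_commute)
  qed
  then have "orthogonal y y"
    using orthogonal_to_span[of y B y] sp orthogonal_commute by blast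
  then have "y = 0" by (simp add: orthogonal_def)
  then show ?thesis unfolding y_def by simp
qed


lemma spectral:
  fixes A :: "real^'n::finite^'n"
  assumes sym: "transpose A = A"
  shows "\<exists>u :: 'n \<Rightarrow> real^'n. \<exists>lam. (\<forall>l. A *v u l = lam l *\<^sub>R u l) \<and>
     (\<forall>l l'. u l \<bullet> u l' = (if l = l' then 1 else 0)) \<and>
     (\<forall>j k. A $ j $ k = (\<Sum>l\<in>UNIV. lam l * u l $ j * u l $ k))"
proof -
  obtain B where B: "finite B" "card B = CARD('n)" "\<forall>b\<in>B. norm b = 1 \<and> (\<exists>l. A *v b = l *\<^sub>R b)"
     "pairwise orthogonal B"
    using spectral_aux[OF sym, of UNIV "CARD('n)"] by auto
  have "\<exists>e. bij_betw e (UNIV :: 'n set) B" using B(1,2) by (simp add: bij_betw_iff_card)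
  then obtain e where e: "bij_betw e (UNIV :: 'n set) B" by blast
  define u where "u l = e l" for l
  define lam where "lam l = (SOME c. A *v u l = c *\<^sub>R u l)" for l
  have uB: "u l \<in> B" for l using e by (auto simp: u_def bij_betw_def)
  have eig: "A *v u l = lam l *\<^sub>R u l" for l
    unfolding lam_def using B(3) uB by (metis (mono_tags, lifting) someI_ex)
  have on: "u l \<bullet> u l' = (if l = l' then 1 else 0)" for l l'
  proof (cases "l = l'")
    case True then show ?thesis using B(3) uB by (simp add: norm_eq_1)
  next
    case False
    then have "u l \<noteq> u l'" using e unfolding u_def bij_betw_def inj_on_def by auto
    then show ?thesis using B(4) uB False by (auto simp: pairwise_def orthogonal_def)
  qed
  have exp: "x = (\<Sum>l\<in>UNIV. (u l \<bullet> x) *\<^sub>R u l)" for x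
  proof -
    have "x = (\<Sum>b\<in>B. (b \<bullet> x) *\<^sub>R b)"
      using orthonormal_expand[OF B(1,2)] B(3,4) by auto
    also have "\<dots> = (\<Sum>l\<in>UNIV. (u l \<bullet> x) *\<^sub>R u l)"
      unfolding u_def using sum.reindex_bij_betw[OF e, of "\<lambda>b. (b \<bullet> x) *\<^sub>R b"] by simp
    finally show ?thesis .
  qed
  have Ax: "A *v x = (\<Sum>l\<in>UNIV. (lam l * (u l \<bullet> x)) *\<^sub>R u l)" for x
  proof -
    have "A *v x = A *v (\<Sum>l\<in>UNIV. (u l \<bullet> x) *\<^sub>R u l)" using exp[of x] by simp
    also have "\<dots> = (\<Sum>l\<in>UNIV. (u l \<bullet> x) *\<^sub>R (A *v u l))"
      by (simp add: linear_sum[OF matrix_vector_mul_linear] matrix_vector_mult_scaleR)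
    also have "\<dots> = (\<Sum>l\<in>UNIV. (lam l * (u l \<bullet> x)) *\<^sub>R u l)"
      by (simp add: eig mult.commute)
    finally show ?thesis .
  qed
  have "A $ j $ k = (\<Sum>l\<in>UNIV. lam l * u l $ j * u l $ k)" for j k
  proof -
    have "A $ j $ k = (A *v axis k 1) $ j" by (simp add: matrix_vector_mult_basis column_def)
    also have "\<dots> = (\<Sum>l\<in>UNIV. lam l * u l $ j * u l $ k)"
      unfolding Ax by (simp add: inner_axis mult_ac)
    finally show ?thesis .
  qed
  then show ?thesis using eig on by blast
qed



lemma pd_facts:
  fixes A :: "real^'n::finite^'n"
  assumes pd: "pos_def_sym A"
  shows "det A > 0" "ln (det A) \<le> trace A - real CARD('n)"
    "\<exists>w::'n\<Rightarrow>real^'n. \<forall>a b. A$a$b = (\<Sum>l\<in>UNIV. w l $ a * w l $ b)"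
proof -
  have sym: "transpose A = A" using pd by (simp add: pos_def_sym_def)
  obtain u :: "'n \<Rightarrow> real^'n" and lam where eig: "\<And>l. A *v u l = lam l *\<^sub>R u l"
    and on: "\<And>l l'. u l \<bullet> u l' = (if l = l' then 1 else 0)"
    and Ajk: "\<And>j k. A $ j $ k = (\<Sum>l\<in>UNIV. lam l * u l $ j * u l $ k)"
    using spectral[OF sym] by blast
  have lpos: "lam l > 0" for l
  proof -
    have "u l \<noteq> 0" using on[of l l] by auto
    then have "u l \<bullet> (A *v u l) > 0" using pd by (simp add: pos_def_sym_def)
    then show ?thesis using on[of l l] by (simp add: eig)
  qed
  define P :: "real^'n^'n" where "P = (\<chi> j l. u l $ j)"
  define D :: "real^'n^'n" where "D = (\<chi> i j. if i = j then lam i else 0)"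
  have AP: "A = P ** D ** transpose P"
  proof -
    have "(P ** D ** transpose P) $ j $ k = (\<Sum>l\<in>UNIV. lam l * u l $ j * u l $ k)" for j k
      by (simp add: P_def D_def matrix_matrix_mult_def transpose_def if_distrib[of "\<lambda>x. _ * x"] sum.delta' mult_ac
            cong: if_cong)
    then show ?thesis by (simp add: vec_eq_iff Ajk)
  qed
  have PP: "transpose P ** P = mat 1"
  proof -
    have "(transpose P ** P) $ l $ l' = u l \<bullet> u l'" for l l'
      by (simp add: P_def matrix_matrix_mult_def transpose_def inner_vec_def)
    then show ?thesis by (simp add: vec_eq_iff on mat_def)
  qed
  have dP: "det P * det P = 1"
    using arg_cong[OF PP, of det] by (simp add: det_mul)
  have dD: "det D = (\<Prod>l\<in>UNIV. lam l)"
    by (subst det_diagonal) (auto simp: D_def)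
  have detA: "det A = (\<Prod>l\<in>UNIV. lam l)"
  proof -
    have "det A = det P * det P * det D" unfolding AP by (simp add: det_mul)
    then show ?thesis using dP dD by simp
  qed
  show "det A > 0" unfolding detA using lpos by (simp add: prod_pos)
  have trA: "trace A = (\<Sum>l\<in>UNIV. lam l)"
  proof -
    have "trace A = (\<Sum>j\<in>UNIV. \<Sum>l\<in>UNIV. lam l * u l $ j * u l $ j)"
      by (simp add: trace_def Ajk)
    also have "\<dots> = (\<Sum>l\<in>UNIV. lam l * (u l \<bullet> u l))"
      by (subst sum.swap) (simp add: inner_vec_def sum_distrib_left mult_ac)
    also have "\<dots> = (\<Sum>l\<in>UNIV. lam l)" using on by simp
    finally show ?thesis .
  qed
  have "ln (det A) = (\<Sum>l\<in>UNIV. ln (lam l))"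
    unfolding detA using lpos by (simp add: ln_prod less_imp_neq[symmetric])
  also have "\<dots> \<le> (\<Sum>l\<in>UNIV. lam l - 1)"
    by (intro sum_mono ln_le_minus_one lpos)
  also have "\<dots> = trace A - real CARD('n)"
    by (simp add: trA sum_subtractf)
  finally show "ln (det A) \<le> trace A - real CARD('n)" .
  show "\<exists>w::'n\<Rightarrow>real^'n. \<forall>a b. A$a$b = (\<Sum>l\<in>UNIV. w l $ a * w l $ b)"
  proof (intro exI allI)
    fix a b
    show "A$a$b = (\<Sum>l\<in>UNIV. (sqrt (lam l) *\<^sub>R u l) $ a * (sqrt (lam l) *\<^sub>R u l) $ b)"
      unfolding Ajk
    proof (rule sum.cong[OF refl])
      fix l
      have s: "sqrt (lam l) * sqrt (lam l) = lam l" using lpos[of l] by simp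
      have "lam l * u l $ a * u l $ b = (sqrt (lam l) * sqrt (lam l)) * u l $ a * u l $ b" by (simp only: s)
      also have "\<dots> = (sqrt (lam l) *\<^sub>R u l) $ a * (sqrt (lam l) *\<^sub>R u l) $ b" by (simp add: mult_ac)
      finally show "lam l * u l $ a * u l $ b = (sqrt (lam l) *\<^sub>R u l) $ a * (sqrt (lam l) *\<^sub>R u l) $ b" .
    qed
  qed
qed

lemma sum_mat_vec: "(\<Sum>i\<in>I. M i) *v x = (\<Sum>i\<in>I. M i *v (x::real^'n::finite))"
  for M :: "'i \<Rightarrow> real^'n^'m::finite"
  by (induction I rule: infinite_finite_induct) (auto simp: matrix_vector_mult_add_rdistrib)

lemma scaleR_mat_vec: "((c::real) *\<^sub>R M) *v x = c *\<^sub>R (M *v (x::real^'n::finite))" for M :: "real^'n^'m::finite"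
  by (simp add: vec_eq_iff matrix_vector_mult_def sum_distrib_left mult_ac)

lemma pd_sum:
  fixes Q :: "'i \<Rightarrow> real^'n::finite^'n" and c :: "'i \<Rightarrow> real"
  assumes "finite I" "I \<noteq> {}" "\<And>i. i \<in> I \<Longrightarrow> pos_def_sym (Q i)" "\<And>i. i \<in> I \<Longrightarrow> c i > 0"
  shows "pos_def_sym (\<Sum>i\<in>I. c i *\<^sub>R Q i)"
  unfolding pos_def_sym_def
proof (intro conjI allI impI)
  have "transpose (Q i) = Q i" if "i \<in> I" for i using assms(3)[OF that] by (simp add: pos_def_sym_def)
  then show "transpose (\<Sum>i\<in>I. c i *\<^sub>R Q i) = (\<Sum>i\<in>I. c i *\<^sub>R Q i)"
    by (simp add: vec_eq_iff transpose_def)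
  fix x :: "real^'n" assume x: "x \<noteq> 0"
  have "x \<bullet> ((\<Sum>i\<in>I. c i *\<^sub>R Q i) *v x) = (\<Sum>i\<in>I. c i * (x \<bullet> (Q i *v x)))"
    by (simp add: sum_mat_vec inner_sum_right scaleR_mat_vec)
  also have "\<dots> > 0"
    using assms x by (intro sum_pos) (auto simp: pos_def_sym_def)
  finally show "x \<bullet> ((\<Sum>i\<in>I. c i *\<^sub>R Q i) *v x) > 0" .
qed



lemma mat_mul_scaleR_right: "(A::real^'n::finite^'m::finite) ** ((c::real) *\<^sub>R (X::real^'k::finite^'n)) = c *\<^sub>R (A ** X)"
  by (simp add: vec_eq_iff matrix_matrix_mult_def sum_distrib_left mult_ac)

lemma mat_mul_scaleR_left: "((c::real) *\<^sub>R (A::real^'n::finite^'m::finite)) ** (X::real^'k::finite^'n) = c *\<^sub>R (A ** X)"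
  by (simp add: vec_eq_iff matrix_matrix_mult_def sum_distrib_left mult_ac)

lemma matrix_add_rdistrib': "((A::real^'n::finite^'m::finite) + B) ** (C::real^'k::finite^'n) = A ** C + B ** C"
  by (simp add: vec_eq_iff matrix_matrix_mult_def sum.distrib distrib_right)

lemma congr_sum:
  fixes A :: "real^'n::finite^'n" and X :: "'i \<Rightarrow> real^'n^'n" and C :: "real^'n^'n"
  shows "A ** (\<Sum>i\<in>I. c i *\<^sub>R X i) ** C = (\<Sum>i\<in>I. c i *\<^sub>R (A ** X i ** C))"
  by (induction I rule: infinite_finite_induct)
     (auto simp: matrix_add_ldistrib matrix_add_rdistrib' mat_mul_scaleR_right mat_mul_scaleR_left)

lemma trace_sum: "trace (\<Sum>i\<in>I. (A i :: real^'n::finite^'n)) = (\<Sum>i\<in>I. trace (A i))"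
  by (induction I rule: infinite_finite_induct) (auto simp: trace_def sum.distrib)

lemma polyf_scale:
  "polyf M a cc (\<chi> i. \<tau> i * t$i) = polyf M (\<lambda>m. a m * (\<Prod>j\<in>UNIV. \<tau> j ^ cc m j)) cc (t::real^'n::finite)"
  by (simp add: polyf_def monom_def power_mult_distrib prod.distrib mult_ac)

theorem lemma2p2:
  fixes Q :: "'n::finite \<Rightarrow> real^'n^'n"
    and f :: "real^'n \<Rightarrow> real"
    and H :: "(real^'n) set"
    and \<xi> :: "real^'n"
    and S T :: "real^'n^'n"
    and \<tau> :: "'n \<Rightarrow> real"
    and B :: "'n \<Rightarrow> real^'n^'n"
  assumes pd: "\<And>i. pos_def_sym (Q i)"
    and tr: "(\<Sum>i\<in>UNIV. trace (Q i)) = real CARD('n)"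
    and H_def: "H = {x. (\<Sum>i\<in>UNIV. x $ i) = 0}"
    and f_def: "f = (\<lambda>x. ln (det (\<Sum>i\<in>UNIV. exp (x $ i) *\<^sub>R Q i)))"
    and xi_H: "\<xi> \<in> H"
    and xi_min: "\<forall>x\<in>H. f \<xi> \<le> f x"
    and S_def: "transpose S ** S = (\<Sum>i\<in>UNIV. exp (\<xi> $ i) *\<^sub>R Q i)"
    and T_def: "T = matrix_inv S"
    and tau_def: "\<And>i. \<tau> i = exp (\<xi> $ i)"
    and B_def: "\<And>i. B i = \<tau> i *\<^sub>R (transpose T ** Q i ** T)"
  shows "mixed_discr B \<ge> mixed_discr Q"
proof -
  define M where "M = (\<Sum>i\<in>UNIV. exp (\<xi> $ i) *\<^sub>R Q i)"
  define M0 where "M0 = (\<Sum>i\<in>UNIV. Q i)"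
  have pdM: "pos_def_sym M" unfolding M_def by (rule pd_sum) (auto simp: pd)
  have pdM0: "pos_def_sym M0"
    using pd_sum[where I=UNIV and c="\<lambda>_. 1" and Q=Q] pd by (simp add: M0_def)
  have trM0: "trace M0 = real CARD('n)" unfolding M0_def trace_sum by (rule tr)
  have lnM0: "ln (det M0) \<le> 0" using pd_facts(2)[OF pdM0] trM0 by simp
  have "(0::real^'n) \<in> H" by (simp add: H_def)
  then have "f \<xi> \<le> f 0" using xi_min by blast
  then have "ln (det M) \<le> ln (det M0)" by (simp add: f_def M_def M0_def)
  then have "ln (det M) \<le> 0" using lnM0 by simp
  moreover have dMpos: "det M > 0" by (rule pd_facts(1)[OF pdM])
  ultimately have dM1: "det M \<le> 1" by simp
  have dS: "det S * det S = det M"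
    using arg_cong[OF S_def, of det] by (simp add: det_mul M_def)
  then have "det S \<noteq> 0" using dMpos by auto
  then have "invertible S" by (simp add: invertible_det_nz)
  then have "S ** T = mat 1" unfolding T_def matrix_inv_def invertible_def
    by (rule someI2_ex) auto
  then have dST: "det S * det T = 1" using arg_cong[of _ _ det] by (metis det_I det_mul)
  define c where "c = det T * det T"
  have "c * det M = 1" unfolding c_def dS[symmetric] using dST
    by (metis mult.commute mult.left_commute mult_1_right)
  then have c1: "c \<ge> 1" using dM1 dMpos
    by (metis le_numeral_extra(4) mult.commute mult_left_le order_less_imp_le order_trans linorder_le_cases
        mult_le_cancel_left1 not_one_le_zero)
  have ptau: "(\<Prod>i\<in>UNIV. \<tau> i) = 1"
  proof -
    have "(\<Prod>i\<in>UNIV. \<tau> i) = exp (\<Sum>i\<in>UNIV. \<xi> $ i)" by (simp add: tau_def exp_sum)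
    then show ?thesis using xi_H by (simp add: H_def)
  qed
  define Ms :: "(('n \<Rightarrow> 'n) \<times> ('n \<Rightarrow> 'n)) set" where "Ms = {\<sigma>. \<sigma> permutes UNIV} \<times> UNIV"
  define aQ where "aQ = (\<lambda>(\<sigma>,\<pi>). of_int (sign \<sigma>) * (\<Prod>k\<in>UNIV. Q (\<pi> k) $ k $ \<sigma> k))"
  define cc :: "(('n \<Rightarrow> 'n) \<times> ('n \<Rightarrow> 'n)) \<Rightarrow> 'n \<Rightarrow> nat" where "cc = (\<lambda>(\<sigma>,\<pi>) j. card {k. \<pi> k = j})"
  have detQ: "(\<lambda>t. det (\<Sum>i\<in>UNIV. t$i *\<^sub>R Q i)) = polyf Ms aQ cc"
    unfolding Ms_def aQ_def cc_def by (rule det_polyf)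
  have fin: "finite Ms" by (simp add: Ms_def)
  have gB: "(\<lambda>t. det (\<Sum>i\<in>UNIV. t$i *\<^sub>R B i)) = polyf Ms (\<lambda>m. c * (aQ m * (\<Prod>j\<in>UNIV. \<tau> j ^ cc m j))) cc"
  proof
    fix t :: "real^'n"
    have "(\<Sum>i\<in>UNIV. t$i *\<^sub>R B i) = (\<Sum>i\<in>UNIV. (\<tau> i * t$i) *\<^sub>R (transpose T ** Q i ** T))"
      by (simp add: B_def mult.commute)
    also have "\<dots> = transpose T ** (\<Sum>i\<in>UNIV. (\<tau> i * t$i) *\<^sub>R Q i) ** T"
      by (rule congr_sum[symmetric])
    finally have "det (\<Sum>i\<in>UNIV. t$i *\<^sub>R B i) = c * det (\<Sum>i\<in>UNIV. (\<chi> i. \<tau> i * t$i) $ i *\<^sub>R Q i)"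
      by (simp add: det_mul c_def mult_ac)
    also have "\<dots> = c * polyf Ms aQ cc (\<chi> i. \<tau> i * t$i)"
      using fun_cong[OF detQ, of "\<chi> i. \<tau> i * t$i"] by simp
    also have "\<dots> = polyf Ms (\<lambda>m. c * (aQ m * (\<Prod>j\<in>UNIV. \<tau> j ^ cc m j))) cc t"
      unfolding polyf_scale by (simp add: polyf_def sum_distrib_left mult_ac)
    finally show "det (\<Sum>i\<in>UNIV. t$i *\<^sub>R B i) = polyf Ms (\<lambda>m. c * (aQ m * (\<Prod>j\<in>UNIV. \<tau> j ^ cc m j))) cc t" .
  qed
  have DQ: "mixed_discr Q = (\<Sum>m\<in>Ms. if (\<forall>j. cc m j = 1) then aQ m else 0)"
    by (rule mixed_discr_polyf[OF fin detQ])
  have "mixed_discr B = (\<Sum>m\<in>Ms. if (\<forall>j. cc m j = 1) then c * (aQ m * (\<Prod>j\<in>UNIV. \<tau> j ^ cc m j)) else 0)"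
    by (rule mixed_discr_polyf[OF fin gB])
  also have "\<dots> = (\<Sum>m\<in>Ms. c * (if (\<forall>j. cc m j = 1) then aQ m else 0))"
    by (rule sum.cong[OF refl]) (simp add: ptau)
  also have "\<dots> = c * mixed_discr Q" unfolding DQ by (simp add: sum_distrib_left)
  finally have DB: "mixed_discr B = c * mixed_discr Q" .
  have "\<forall>i. \<exists>w::'n\<Rightarrow>real^'n. \<forall>a b. Q i $a$b = (\<Sum>l\<in>UNIV. w l $ a * w l $ b)"
    using pd_facts(3)[OF pd] by blast
  then obtain w :: "'n \<Rightarrow> 'n \<Rightarrow> real^'n" where w: "\<And>i a b. Q i $a$b = (\<Sum>l\<in>UNIV. w i l $ a * w i l $ b)"
    by metis
  have "mixed_discr Q \<ge> 0" unfolding mixed_discr_MD by (rule MD_nonneg[OF w])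
  then show ?thesis unfolding DB using c1 by (simp add: mult_le_cancel_right1)
qed

end
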